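(* Let $Q=Q^+(5,q)$ be the non-degenerate hyperbolic quadric in $\mathrm{PG}(5,q)$ with associated polarity $\perp$, and let $\ell$ be a line of $\mathrm{PG}(5,q)$ disjoint from $Q$. Let $S$ be a line spread of the solid $\ell^\perp$. For every line $m\in S$, let $\mathcal{F}_m$ be the set of lines of $Q$ contained in the solid $\langle m,\ell\rangle$, and let $\mathcal{F}=\bigcup_{m\in S}\mathcal{F}_m$. Then $\mathcal{F}$ is a $(3,2)$-ovoid of $Q$, i.e. every plane contained in $Q$ contains precisely one line of $\mathcal{F}$.
   Context: Projective terminology is used: points, lines, planes and solids of $\mathrm{PG}(5,q)$ are subspaces of projective dimension $0,1,2,3$ (vector dimensions $1,2,3,4$). A line spread of a solid is a set of lines of the solid partitioning its points. The polarity $\perp$ is the one induced by the bilinear form associated to the quadratic form defining $Q$. The generators of $Q^+(5,q)$ are the planes contained in $Q$; a $(3,2)$-ovoid is a set of lines of $Q$ such that each such plane contains exactly one of them. *)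

theory Defs
  imports "HOL-Analysis.Analysis"
begin

text \<open>The ambient space PG(5,q) is the projective space of the vector space F^6,
  F a finite field with q elements. Projective subspaces are identified with
  vector subspaces of F^6; projective dimension k = vector dimension k+1.\<close>

type_synonym 'a vec6 = "'a ^ 6"

definition psub :: "nat \<Rightarrow> ('a::field) vec6 set \<Rightarrow> bool" where
  "psub k U \<longleftrightarrow> vec.subspace U \<and> vec.dim U = k + 1"

abbreviation pline :: "('a::field) vec6 set \<Rightarrow> bool" where "pline U \<equiv> psub 1 U"
abbreviation pplane :: "('a::field) vec6 set \<Rightarrow> bool" where "pplane U \<equiv> psub 2 U"
abbreviation psolid :: "('a::field) vec6 set \<Rightarrow> bool" where "psolid U \<equiv> psub 3 U"

definition hq :: "('a::field) vec6 \<Rightarrow> 'a" where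
  "hq x = x$0 * x$1 + x$2 * x$3 + x$4 * x$5"

definition hb :: "('a::field) vec6 \<Rightarrow> 'a vec6 \<Rightarrow> 'a" where
  "hb x y = hq (x + y) - hq x - hq y"

definition perp :: "('a::field) vec6 set \<Rightarrow> 'a vec6 set" where
  "perp U = {y. \<forall>x\<in>U. hb x y = 0}"

definition on_quadric :: "('a::field) vec6 set \<Rightarrow> bool" where
  "on_quadric U \<longleftrightarrow> (\<forall>x\<in>U. hq x = 0)"

definition disjoint_quadric :: "('a::field) vec6 set \<Rightarrow> bool" where
  "disjoint_quadric U \<longleftrightarrow> (\<forall>x\<in>U. x \<noteq> 0 \<longrightarrow> hq x \<noteq> 0)"

definition quadric_lines :: "('a::field) vec6 set set" where
  "quadric_lines = {L. pline L \<and> on_quadric L}"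

definition generators :: "('a::field) vec6 set set" where
  "generators = {P. pplane P \<and> on_quadric P}"

definition line_spread :: "('a::field) vec6 set set \<Rightarrow> 'a vec6 set \<Rightarrow> bool" where
  "line_spread S T \<longleftrightarrow> (\<forall>m\<in>S. pline m \<and> m \<subseteq> T) \<and>
     (\<forall>x\<in>T. x \<noteq> 0 \<longrightarrow> (\<exists>!m. m \<in> S \<and> x \<in> m))"

definition ovoid32 :: "('a::field) vec6 set set \<Rightarrow> bool" where
  "ovoid32 F \<longleftrightarrow> F \<subseteq> quadric_lines \<and>
     (\<forall>P\<in>generators. \<exists>!L. L \<in> F \<and> L \<subseteq> P)"

end

theory Submission
  imports Defs "HOL-Library.FuncSet"
begin


lemma card_subspace:
  fixes U :: "(('a::{field,finite}) ^ 'n) set"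
  assumes "vec.subspace U"
  shows "card U = CARD('a) ^ vec.dim U"
proof -
  obtain B where B: "B \<subseteq> U" "vec.independent B" "U \<subseteq> vec.span B" "card B = vec.dim U"
    using vec.basis_exists by blast
  have fB: "finite B" using B(2) vec.independent_explicit by blast
  have UB: "U = vec.span B"
    using B(3) vec.span_minimal[OF B(1) assms] by (rule subset_antisym)
  define g where "g = (\<lambda>u. \<Sum>v\<in>B. u v *s v)"
  have img: "g ` (PiE B (\<lambda>_. UNIV)) = vec.span B"
  proof
    show "g ` (PiE B (\<lambda>_. UNIV)) \<subseteq> vec.span B"
      unfolding vec.span_finite[OF fB] g_def by auto
    show "vec.span B \<subseteq> g ` (PiE B (\<lambda>_. UNIV))"
    proof
      fix x assume "x \<in> vec.span B"
      then obtain u where x: "x = g u" unfolding vec.span_finite[OF fB] g_def by auto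
      have "g (restrict u B) = g u" unfolding g_def by (intro sum.cong) simp_all
      moreover have "restrict u B \<in> PiE B (\<lambda>_. UNIV)" by auto
      ultimately show "x \<in> g ` (PiE B (\<lambda>_. UNIV))" using x by (metis image_eqI)
    qed
  qed
  have inj: "inj_on g (PiE B (\<lambda>_. UNIV))"
  proof (rule inj_onI)
    fix u w assume u: "u \<in> PiE B (\<lambda>_. UNIV)" and w: "w \<in> PiE B (\<lambda>_. UNIV)" and e: "g u = g w"
    have "(\<Sum>v\<in>B. (u v - w v) *s v) = 0"
      using e unfolding g_def by (simp add: vec.scale_left_diff_distrib sum_subtractf)
    moreover have "\<forall>c. (\<Sum>v\<in>B. c v *s v) = 0 \<longrightarrow> (\<forall>v \<in> B. c v = 0)"
      using B(2) unfolding vec.independent_explicit by blast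
    ultimately have "\<forall>v\<in>B. u v - w v = 0" by (rule_tac mp[OF spec[of _ "\<lambda>v. u v - w v"]])
    then show "u = w" using u w by (metis PiE_ext eq_iff_diff_eq_0)
  qed
  have "card U = card (PiE B (\<lambda>_. (UNIV::'a set)))"
    using card_image[OF inj] img UB by simp
  also have "\<dots> = CARD('a) ^ card B" by (simp add: card_PiE fB)
  finally show ?thesis using B(4) by simp
qed


lemma hb_expand: "hb x y = x$0*y$1 + x$1*y$0 + x$2*y$3 + x$3*y$2 + x$4*y$5 + x$5*y$4"
  unfolding hb_def hq_def by (simp add: algebra_simps)

lemma hb_sym: "hb x y = hb y x"
  unfolding hb_expand by (simp add: algebra_simps)

lemma hb_add2: "hb x (y + z) = hb x y + hb x z"
  unfolding hb_expand by (simp add: algebra_simps)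
lemma hb_add1: "hb (y + z) x = hb y x + hb z x"
  unfolding hb_expand by (simp add: algebra_simps)
lemma hb_scale2: "hb x (c *s y) = c * hb x y"
  unfolding hb_expand by (simp add: algebra_simps)
lemma hb_scale1: "hb (c *s y) x = c * hb y x"
  unfolding hb_expand by (simp add: algebra_simps)
lemma hb_diff2: "hb x (y - z) = hb x y - hb x z"
  unfolding hb_expand by (simp add: algebra_simps)
lemma hb_self: "hb x x = 2 * hq x"
  unfolding hb_expand hq_def by (simp add: algebra_simps)
lemma hq_add: "hq (x + y) = hq x + hq y + hb x y"
  unfolding hb_def by simp
lemma hq_scale: "hq (c *s x) = c^2 * hq x"
  unfolding hq_def by (simp add: algebra_simps power2_eq_square)

lemma subspace_perp: "vec.subspace (perp U)"
  unfolding vec.subspace_def perp_def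
proof (intro conjI ballI allI; clarsimp)
  show "hb x 0 = 0" for x :: "'a vec6" by (simp add: hb_expand)
qed (simp_all add: hb_add2 hb_scale2)

lemma field_disc:
  fixes q1 b q2 :: "'a::{field,finite}"
  assumes an: "\<And>s t. s \<noteq> 0 \<or> t \<noteq> 0 \<Longrightarrow> s^2*q1 + s*t*b + t^2*q2 \<noteq> 0"
  shows "4*q1*q2 - b^2 \<noteq> 0"
proof
  assume D: "4*q1*q2 - b^2 = 0"
  have q1: "q1 \<noteq> 0" using an[of 1 0] by simp
  show False
  proof (cases "(2::'a) = 0")
    case False
    have "(-b)^2*q1 + (-b)*(2*q1)*b + (2*q1)^2*q2 = q1 * (4*q1*q2 - b^2)"
      by (simp add: algebra_simps power2_eq_square)
    then show False using an[of "-b" "2*q1"] D q1 False by simp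
  next
    case True
    have four: "(4::'a) = 2 * 2" by simp
    have "b^2 = 0" using D True by (simp add: four)
    then have b: "b = 0" by simp
    have inj: "inj (\<lambda>x::'a. x^2)"
    proof (rule injI)
      fix x y :: 'a assume "x^2 = y^2"
      have "(x - y)^2 = x^2 - y^2 + 2*(y^2 - x*y)"
        by (simp add: algebra_simps power2_eq_square)
      also have "\<dots> = 0" using \<open>x^2 = y^2\<close> True by simp
      finally show "x = y" by simp
    qed
    have "surj (\<lambda>x::'a. x^2)" by (rule finite_UNIV_inj_surj[OF _ inj]) simp
    then obtain c where c: "c^2 = q2 / q1" by (metis surjD)
    have "c^2*q1 + c*1*b + 1^2*q2 = 2 * q2" using c q1 b by (simp add: algebra_simps)
    then show False using an[of 1 c] True an[of c 1] by simp
  qed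
qed

lemma line_perp:
  fixes l :: "('a::{field,finite}) vec6 set"
  assumes pl: "pline l" and dq: "disjoint_quadric l"
  shows "l \<inter> perp l = {0}" "\<forall>x. \<exists>a\<in>l. \<exists>w\<in>perp l. x = a + w"
proof -
  have sl: "vec.subspace l" and dl: "vec.dim l = 2" using pl by (auto simp: psub_def)
  obtain B where B: "B \<subseteq> l" "vec.independent B" "l \<subseteq> vec.span B" "card B = vec.dim l"
    using vec.basis_exists by blast
  obtain u1 u2 where U: "B = {u1, u2}" "u1 \<noteq> u2" using B(4) dl by (auto simp: card_2_iff)
  have u1: "u1 \<in> l" and u2: "u2 \<in> l" using B(1) U by auto
  have fB: "finite B" using U by simp
  have repr: "\<exists>s t. x = s *s u1 + t *s u2" if "x \<in> l" for x
  proof -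
    from that B(3) obtain c where "x = (\<Sum>v\<in>B. c v *s v)" unfolding vec.span_finite[OF fB] by auto
    then have "x = c u1 *s u1 + c u2 *s u2" using U by simp
    then show ?thesis by blast
  qed
  have indep: "s = 0 \<and> t = 0" if "s *s u1 + t *s u2 = 0" for s t
  proof -
    have all: "\<forall>c. (\<Sum>v\<in>B. c v *s v) = 0 \<longrightarrow> (\<forall>v \<in> B. c v = 0)"
      using B(2) unfolding vec.independent_explicit by blast
    have "(\<Sum>v\<in>B. (if v = u1 then s else t) *s v) = 0" using U that by simp
    then have "\<forall>v \<in> B. (if v = u1 then s else t) = 0" using all[rule_format, of "\<lambda>v. if v = u1 then s else t"] by blast
    then show ?thesis using U by auto
  qed
  have mem: "s *s u1 + t *s u2 \<in> l" for s t
    using sl u1 u2 by (simp add: vec.subspace_add vec.subspace_scale)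
  define q1 where "q1 = hq u1"
  define q2 where "q2 = hq u2"
  define b where "b = hb u1 u2"
  have hqst: "hq (s *s u1 + t *s u2) = s^2*q1 + s*t*b + t^2*q2" for s t
    unfolding q1_def q2_def b_def hq_add hq_scale hb_scale1 hb_scale2 by (simp add: algebra_simps)
  have an: "s^2*q1 + s*t*b + t^2*q2 \<noteq> 0" if "s \<noteq> 0 \<or> t \<noteq> 0" for s t
  proof -
    have "s *s u1 + t *s u2 \<noteq> 0" using indep that by blast
    then have "hq (s *s u1 + t *s u2) \<noteq> 0" using dq mem unfolding disjoint_quadric_def by blast
    then show ?thesis using hqst by simp
  qed
  have D: "4*q1*q2 - b^2 \<noteq> 0" by (rule field_disc) (use an in blast)
  have b21: "hb u2 u1 = b" using hb_sym b_def by metis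
  have s11: "hb u1 u1 = 2*q1" and s22: "hb u2 u2 = 2*q2" by (simp_all add: hb_self q1_def q2_def)
  have perp_iff: "y \<in> perp l \<longleftrightarrow> hb u1 y = 0 \<and> hb u2 y = 0" for y
  proof
    assume "y \<in> perp l" then show "hb u1 y = 0 \<and> hb u2 y = 0" using u1 u2 by (auto simp: perp_def)
  next
    assume h: "hb u1 y = 0 \<and> hb u2 y = 0"
    show "y \<in> perp l" unfolding perp_def mem_Collect_eq
    proof (intro ballI)
      fix x assume "x \<in> l"
      then obtain s t where "x = s *s u1 + t *s u2" using repr by blast
      then show "hb x y = 0" using h by (simp add: hb_add1 hb_scale1)
    qed
  qed
  show "l \<inter> perp l = {0}"
  proof (intro equalityI subsetI)
    fix a assume a: "a \<in> l \<inter> perp l"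
    then obtain s t where st: "a = s *s u1 + t *s u2" using repr by blast
    have e1: "s*(2*q1) + t*b = 0" using a perp_iff st
      by (simp add: hb_add2 hb_scale2 s11 b_def)
    have e2: "s*b + t*(2*q2) = 0" using a perp_iff st
      by (simp add: hb_add2 hb_scale2 s22 b21)
    have "(4*q1*q2 - b^2) * s = 2*q2*(s*(2*q1) + t*b) - b*(s*b + t*(2*q2))"
      by (simp add: algebra_simps power2_eq_square)
    then have "s = 0" using e1 e2 D by simp
    have "(4*q1*q2 - b^2) * t = 2*q1*(s*b + t*(2*q2)) - b*(s*(2*q1) + t*b)"
      by (simp add: algebra_simps power2_eq_square)
    then have "t = 0" using e1 e2 D by simp
    show "a \<in> {0}" using st \<open>s = 0\<close> \<open>t = 0\<close> by simp
  next
    fix a assume "a \<in> {0::'a vec6}"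
    then show "a \<in> l \<inter> perp l" using sl subspace_perp[of l]
      by (simp add: vec.subspace_0)
  qed
  show "\<forall>x. \<exists>a\<in>l. \<exists>w\<in>perp l. x = a + w"
  proof
    fix x
    define r1 where "r1 = hb u1 x"
    define r2 where "r2 = hb u2 x"
    define dd where "dd = 4*q1*q2 - b^2"
    define s where "s = (2*q2*r1 - b*r2)/dd"
    define t where "t = (2*q1*r2 - b*r1)/dd"
    define a where "a = s *s u1 + t *s u2"
    have "hb u1 (x - a) = r1 - (s*(2*q1) + t*b)"
      unfolding a_def by (simp add: hb_diff2 hb_add2 hb_scale2 s11 b_def r1_def)
    also have "\<dots> = 0"
    proof -
      have "s*(2*q1) + t*b = ((2*q2*r1 - b*r2)*(2*q1) + (2*q1*r2 - b*r1)*b)/dd"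
        unfolding s_def t_def by (simp add: add_divide_distrib)
      also have "(2*q2*r1 - b*r2)*(2*q1) + (2*q1*r2 - b*r1)*b = dd * r1"
        unfolding dd_def by (simp add: algebra_simps power2_eq_square)
      finally show ?thesis using D dd_def by simp
    qed
    finally have h1: "hb u1 (x - a) = 0" .
    have "hb u2 (x - a) = r2 - (s*b + t*(2*q2))"
      unfolding a_def by (simp add: hb_diff2 hb_add2 hb_scale2 s22 b21 r2_def)
    also have "\<dots> = 0"
    proof -
      have "s*b + t*(2*q2) = ((2*q2*r1 - b*r2)*b + (2*q1*r2 - b*r1)*(2*q2))/dd"
        unfolding s_def t_def by (simp add: add_divide_distrib)
      also have "(2*q2*r1 - b*r2)*b + (2*q1*r2 - b*r1)*(2*q2) = dd * r2"
        unfolding dd_def by (simp add: algebra_simps power2_eq_square)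
      finally show ?thesis using D dd_def by simp
    qed
    finally have h2: "hb u2 (x - a) = 0" .
    have "x - a \<in> perp l" using h1 h2 perp_iff by blast
    moreover have "a \<in> l" unfolding a_def by (rule mem)
    ultimately show "\<exists>a\<in>l. \<exists>w\<in>perp l. x = a + w" by (metis add.commute diff_add_cancel)
  qed
qed


abbreviation ssum :: "('a::field) vec6 set \<Rightarrow> 'a vec6 set \<Rightarrow> 'a vec6 set" where
  "ssum A B \<equiv> {x + y |x y. x \<in> A \<and> y \<in> B}"

lemma dim_sum_direct:
  fixes A B :: "('a::field) vec6 set"
  assumes "vec.subspace A" "vec.subspace B" "A \<inter> B = {0}"
  shows "vec.dim (ssum A B) = vec.dim A + vec.dim B"
  using vec.dim_sums_Int[OF assms(1,2)] assms(3) by simp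

lemma sum_sub:
  fixes A B C :: "('a::field) vec6 set"
  assumes "vec.subspace C" "A \<subseteq> C" "B \<subseteq> C"
  shows "ssum A B \<subseteq> C"
  using assms vec.subspace_add by blast

lemma sub_sum1:
  fixes A B :: "('a::field) vec6 set"
  assumes "vec.subspace B"
  shows "A \<subseteq> ssum A B"
proof
  fix x assume "x \<in> A"
  moreover have "(0::'a vec6) \<in> B" using assms vec.subspace_0 by blast
  ultimately show "x \<in> ssum A B" by force
qed

lemma sub_sum2:
  fixes A B :: "('a::field) vec6 set"
  assumes "vec.subspace A"
  shows "B \<subseteq> ssum A B"
proof
  fix x assume "x \<in> B"
  moreover have "(0::'a vec6) \<in> A" using assms vec.subspace_0 by blast
  ultimately show "x \<in> ssum A B" by force
qed

lemma nonzero_of_dim: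
  fixes X :: "('a::field) vec6 set"
  assumes "vec.dim X \<ge> 1"
  shows "\<exists>x\<in>X. x \<noteq> 0"
proof (rule ccontr)
  assume "\<not> ?thesis"
  then have "X \<subseteq> {0}" by auto
  then have "vec.dim X = 0" using vec.dim_eq_0 by blast
  then show False using assms by linarith
qed

lemma dim_le6: "vec.dim (X :: ('a::field) vec6 set) \<le> 6"
  using dim_subset_UNIV_cart_gen[of X] by simp

lemma dim_UNIV6: "vec.dim (UNIV :: ('a::field) vec6 set) = 6"
proof -
  have "vec.dim (UNIV :: ('a::field) vec6 set) = CARD(6)" by (rule vec_dim_card)
  then show ?thesis by simp
qed

lemma zero_int: "vec.subspace A \<Longrightarrow> vec.subspace B \<Longrightarrow> A \<inter> B \<subseteq> {0} \<Longrightarrow> A \<inter> B = {0}"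
  using vec.subspace_0 by blast

lemma count_arith:
  fixes k q :: nat
  assumes q: "q \<ge> 2" and e1: "k * (q - 1) = q^3 - 1" and e2: "k * (q^2 - 1) = q^4 - 1"
  shows False
proof -
  have "q^3 \<ge> 1" "q^2 \<ge> 1" "q^4 \<ge> 1" using q by simp_all
  then have i1: "int k * (int q - 1) = int q^3 - 1" and i2: "int k * (int q^2 - 1) = int q^4 - 1"
  proof -
    have a: "int (k * (q - 1)) = int (q^3 - 1)" "int (k * (q^2 - 1)) = int (q^4 - 1)" using e1 e2 by simp_all
    show "int k * (int q - 1) = int q^3 - 1" "int k * (int q^2 - 1) = int q^4 - 1"
      using a \<open>q^3 \<ge> 1\<close> \<open>q^2 \<ge> 1\<close> \<open>q^4 \<ge> 1\<close> q by (simp_all add: of_nat_diff)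
  qed
  have "int k * (int q - 1) = (int q^2 + int q + 1) * (int q - 1)"
    using i1 by (simp add: algebra_simps power2_eq_square power3_eq_cube)
  then have k: "int k = int q^2 + int q + 1" using q by simp
  have "(int q^2 + int q + 1) * (int q^2 - 1) = int q^4 - 1" using i2 k by simp
  then have "int q * (int q - 1) * (int q + 1) = 0"
    by (simp add: algebra_simps power2_eq_square power3_eq_cube power4_eq_xxxx)
  then show False using q by simp
qed

theorem theorem4p7:
  fixes l :: "('a::{field,finite}) vec6 set"
    and S :: "'a vec6 set set"
  assumes "pline l"
    and "disjoint_quadric l"
    and "line_spread S (perp l)"
  shows "ovoid32 (\<Union>m\<in>S. {L \<in> quadric_lines. L \<subseteq> vec.span (m \<union> l)})"
proof -
  define W where "W = perp l"
  have sl: "vec.subspace l" and dl: "vec.dim l = 2" using assms(1) by (auto simp: psub_def)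
  have sW: "vec.subspace W" unfolding W_def by (rule subspace_perp)
  have lW: "l \<inter> W = {0}" and dec: "\<forall>x. \<exists>a\<in>l. \<exists>w\<in>W. x = a + w"
    using line_perp[OF assms(1,2)] unfolding W_def by auto
  have lWU: "ssum l W = UNIV" using dec by blast
  have d6: "vec.dim (ssum l W) = 6" by (simp only: lWU dim_UNIV6)
  have dW: "vec.dim W = 4"
    using dim_sum_direct[OF sl sW lW] d6 dl by linarith
  have Sm: "vec.subspace m" "vec.dim m = 2" "m \<subseteq> W" if "m \<in> S" for m
    using assms(3) that unfolding line_spread_def psub_def W_def by auto
  have Sx: "\<exists>!m. m \<in> S \<and> x \<in> m" if "x \<in> W" "x \<noteq> 0" for x
    using assms(3) that unfolding line_spread_def W_def by auto
  define T where "T m = ssum m l" for m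
  have sT: "vec.subspace (T m)" if "m \<in> S" for m
    unfolding T_def by (rule vec.subspace_sums[OF Sm(1)[OF that] sl])
  have spanT: "vec.span (m \<union> l) = T m" if "m \<in> S" for m
  proof -
    have e: "vec.span m = m" "vec.span l = l"
      using Sm(1)[OF that] sl vec.span_eq_iff by blast+
    show ?thesis unfolding T_def vec.span_Un e by (rule refl)
  qed
  have ml: "m \<inter> l = {0}" if "m \<in> S" for m
    using Sm[OF that] lW sl by (intro zero_int) auto
  have dT: "vec.dim (T m) = 4" if "m \<in> S" for m
    unfolding T_def using dim_sum_direct[OF Sm(1)[OF that] sl ml[OF that]] Sm(2)[OF that] dl by simp
  have lT: "l \<subseteq> T m" if "m \<in> S" for m
    unfolding T_def by (rule sub_sum2[OF Sm(1)[OF that]])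
  have mT: "m \<subseteq> T m" if "m \<in> S" for m
    unfolding T_def by (rule sub_sum1[OF sl])
  have clX: "vec.dim X \<le> 2 \<and> (vec.dim X = 2 \<longrightarrow> ssum X l = T m)"
    if m: "m \<in> S" and X: "vec.subspace X" "X \<subseteq> T m" "X \<inter> l = {0}" for X m
  proof -
    have sub: "ssum X l \<subseteq> T m" by (rule sum_sub[OF sT[OF m] X(2) lT[OF m]])
    have dXl: "vec.dim (ssum X l) = vec.dim X + 2" using dim_sum_direct[OF X(1) sl X(3)] dl by simp
    have le: "vec.dim (ssum X l) \<le> 4" using vec.dim_subset[OF sub] dT[OF m] by simp
    show ?thesis
    proof (intro conjI impI)
      show "vec.dim X \<le> 2" using dXl le by simp
      assume "vec.dim X = 2"
      then show "ssum X l = T m"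
        using vec.subspace_dim_equal[OF vec.subspace_sums[OF X(1) sl] sT[OF m] sub] dXl dT[OF m] by simp
    qed
  qed
  let ?F = "\<Union>m\<in>S. {L \<in> quadric_lines. L \<subseteq> vec.span (m \<union> l)}"
  show ?thesis
    unfolding ovoid32_def
  proof (intro conjI ballI)
    show "?F \<subseteq> quadric_lines" by blast
    fix P :: "'a vec6 set" assume "P \<in> generators"
    then have sP: "vec.subspace P" and dP: "vec.dim P = 3" and qP: "\<forall>x\<in>P. hq x = 0"
      unfolding generators_def psub_def on_quadric_def by auto
    have Pl: "P \<inter> l = {0}"
    proof (rule zero_int[OF sP sl], rule subsetI)
      fix x assume "x \<in> P \<inter> l"
      then show "x \<in> {0}" using qP assms(2) unfolding disjoint_quadric_def by auto
    qed
    define PL where "PL = ssum P l"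
    have sPL: "vec.subspace PL" unfolding PL_def by (rule vec.subspace_sums[OF sP sl])
    have dPL: "vec.dim PL = 5" unfolding PL_def using dim_sum_direct[OF sP sl Pl] dP dl by simp
    have PPL: "P \<subseteq> PL" unfolding PL_def by (rule sub_sum1[OF sl])
    have lPL: "l \<subseteq> PL" unfolding PL_def by (rule sub_sum2[OF sP])
    define H where "H = PL \<inter> W"
    have sH: "vec.subspace H" unfolding H_def by (rule vec.subspace_inter[OF sPL sW])
    have HW: "H \<subseteq> W" unfolding H_def by blast
    have PLW: "ssum PL W = UNIV" using dec lPL by blast
    have d6': "vec.dim (ssum PL W) = 6" by (simp only: PLW dim_UNIV6)
    have dH: "vec.dim H = 3"
      using vec.dim_sums_Int[OF sPL sW] d6' dPL dW unfolding H_def by linarith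
    have TPL: "T m \<subseteq> PL" if "m \<in> S" "m \<subseteq> H" for m
      unfolding T_def using that H_def by (intro sum_sub[OF sPL _ lPL]) auto
    have PT2: "vec.dim (P \<inter> T m) = 2" if m: "m \<in> S" "m \<subseteq> H" for m
    proof -
      have s1: "ssum P (T m) \<subseteq> PL" by (rule sum_sub[OF sPL PPL TPL[OF m]])
      have "vec.dim (ssum P (T m)) + vec.dim (P \<inter> T m) = 3 + 4"
        using vec.dim_sums_Int[OF sP sT[OF m(1)]] dP dT[OF m(1)] by simp
      moreover have "vec.dim (ssum P (T m)) \<le> 5" using vec.dim_subset[OF s1] dPL by simp
      moreover have "vec.dim (P \<inter> T m) \<le> 2"
        using clX[OF m(1) vec.subspace_inter[OF sP sT[OF m(1)]]] Pl
          zero_int[OF vec.subspace_inter[OF sP sT[OF m(1)]] sl] by blast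
      ultimately show ?thesis by linarith
    qed
    have clU: "m \<subseteq> H \<and> L = P \<inter> T m"
      if m: "m \<in> S" and L: "L \<in> quadric_lines" "L \<subseteq> P" "L \<subseteq> T m" for L m
    proof -
      have sL: "vec.subspace L" and dL: "vec.dim L = 2" using L(1) unfolding quadric_lines_def psub_def by auto
      have Ll: "L \<inter> l = {0}" using Pl L(2) sL sl by (intro zero_int) auto
      have "ssum L l = T m" using clX[OF m sL L(3) Ll] dL by simp
      moreover have "ssum L l \<subseteq> PL" using L(2) PPL lPL by (intro sum_sub[OF sPL]) auto
      ultimately have "m \<subseteq> PL" using mT[OF m] by blast
      then have mH: "m \<subseteq> H" unfolding H_def using Sm(3)[OF m] by blast
      have "L = P \<inter> T m"
        using vec.subspace_dim_equal[OF sL vec.subspace_inter[OF sP sT[OF m]]] L(2,3) dL PT2[OF m mH] by simp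
      with mH show ?thesis by blast
    qed
    have clD: "m = m'" if m: "m \<in> S" "m \<subseteq> H" and m': "m' \<in> S" "m' \<subseteq> H" for m m'
    proof -
      have sub: "ssum m m' \<subseteq> H" by (rule sum_sub[OF sH m(2) m'(2)])
      have "vec.dim (ssum m m') \<le> 3" using vec.dim_subset[OF sub] dH by simp
      moreover have "vec.dim (ssum m m') + vec.dim (m \<inter> m') = 2 + 2"
        using vec.dim_sums_Int[OF Sm(1)[OF m(1)] Sm(1)[OF m'(1)]] Sm(2)[OF m(1)] Sm(2)[OF m'(1)] by simp
      ultimately have "vec.dim (m \<inter> m') \<ge> 1" by linarith
      then obtain x where x: "x \<in> m \<inter> m'" "x \<noteq> 0" using nonzero_of_dim by blast
      have "x \<in> W" using x Sm(3)[OF m(1)] by blast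
      then show ?thesis using Sx[OF _ x(2)] x(1) m(1) m'(1) by blast
    qed
    have ex: "\<exists>m\<in>S. m \<subseteq> H"
    proof (rule ccontr)
      assume nex: "\<not> ?thesis"
      define q where "q = CARD('a)"
      have q2: "q \<ge> 2"
      proof -
        have "card {0::'a, 1} = 2" by simp
        moreover have "card {0::'a, 1} \<le> card (UNIV::'a set)" by (rule card_mono) simp_all
        ultimately show ?thesis unfolding q_def by simp
      qed
      have fS: "finite S" by (rule finite_subset[OF subset_UNIV]) simp
      have fin: "finite (X :: 'a vec6 set)" for X by (rule finite_subset[OF subset_UNIV]) simp
      have d1: "vec.dim (m \<inter> H) = 1" if m: "m \<in> S" for m
      proof -
        have sub: "ssum m H \<subseteq> W" by (rule sum_sub[OF sW Sm(3)[OF m] HW])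
        have "vec.dim (ssum m H) \<le> 4" using vec.dim_subset[OF sub] dW by simp
        moreover have "vec.dim (ssum m H) + vec.dim (m \<inter> H) = 2 + 3"
          using vec.dim_sums_Int[OF Sm(1)[OF m] sH] Sm(2)[OF m] dH by simp
        moreover have "vec.dim (m \<inter> H) \<noteq> 2"
        proof
          assume "vec.dim (m \<inter> H) = 2"
          then have "m \<inter> H = m"
            using vec.subspace_dim_equal[OF vec.subspace_inter[OF Sm(1)[OF m] sH] Sm(1)[OF m]] Sm(2)[OF m] by simp
          then show False using nex m by blast
        qed
        moreover have "vec.dim (m \<inter> H) \<le> 2" using vec.dim_subset[of "m \<inter> H" m] Sm(2)[OF m] by simp
        ultimately show ?thesis by linarith
      qed
      have cz: "card (X - {0}) = q ^ vec.dim X - 1" if "vec.subspace X" for X :: "'a vec6 set"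
      proof -
        have "0 \<in> X" using that vec.subspace_0 by blast
        then show ?thesis using card_subspace[OF that] fin[of X] unfolding q_def by simp
      qed
      have HU: "H - {0} = (\<Union>m\<in>S. m \<inter> H - {0})"
      proof
        show "H - {0} \<subseteq> (\<Union>m\<in>S. m \<inter> H - {0})"
        proof
          fix x assume x: "x \<in> H - {0}"
          then obtain m where "m \<in> S" "x \<in> m" using Sx[of x] HW by blast
          then show "x \<in> (\<Union>m\<in>S. m \<inter> H - {0})" using x by blast
        qed
      qed blast
      have WU: "W - {0} = (\<Union>m\<in>S. m - {0})"
      proof
        show "W - {0} \<subseteq> (\<Union>m\<in>S. m - {0})"
        proof
          fix x assume x: "x \<in> W - {0}"
          then obtain m where "m \<in> S" "x \<in> m" using Sx[of x] by blast
          then show "x \<in> (\<Union>m\<in>S. m - {0})" using x by blast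
        qed
      qed (use Sm(3) in blast)
      have disj: "(m - {0}) \<inter> (m' - {0}) = {}" if "m \<in> S" "m' \<in> S" "m \<noteq> m'" for m m'
      proof (rule ccontr)
        assume "\<not> ?thesis"
        then obtain x where x: "x \<in> m" "x \<in> m'" "x \<noteq> 0" by blast
        then have "x \<in> W" using Sm(3)[OF that(1)] by blast
        then show False using Sx[OF _ x(3)] x that by blast
      qed
      have "card (H - {0}) = (\<Sum>m\<in>S. card (m \<inter> H - {0}))"
        unfolding HU by (rule card_UN_disjoint[OF fS]) (use fin disj in blast)+
      also have "\<dots> = (\<Sum>m\<in>S. q - 1)"
        by (rule sum.cong[OF refl]) (simp add: cz vec.subspace_inter[OF Sm(1) sH] d1)
      finally have e1: "card S * (q - 1) = q^3 - 1" using cz[OF sH] dH by simp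
      have "card (W - {0}) = (\<Sum>m\<in>S. card (m - {0}))"
        unfolding WU by (rule card_UN_disjoint[OF fS]) (use fin disj in blast)+
      also have "\<dots> = (\<Sum>m\<in>S. q^2 - 1)"
        by (rule sum.cong[OF refl]) (simp add: cz Sm)
      finally have e2: "card S * (q^2 - 1) = q^4 - 1" using cz[OF sW] dW by simp
      show False by (rule count_arith[OF q2 e1 e2])
    qed
    then obtain m where m: "m \<in> S" "m \<subseteq> H" by blast
    define L where "L = P \<inter> T m"
    have LF: "L \<in> ?F"
    proof -
      have "vec.subspace L" unfolding L_def by (rule vec.subspace_inter[OF sP sT[OF m(1)]])
      then have "L \<in> quadric_lines" using PT2[OF m] qP unfolding quadric_lines_def psub_def on_quadric_def L_def by auto
      moreover have "L \<subseteq> vec.span (m \<union> l)" using spanT[OF m(1)] L_def by blast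
      ultimately show ?thesis using m(1) by blast
    qed
    show "\<exists>!L. L \<in> ?F \<and> L \<subseteq> P"
    proof (rule ex1I[of _ L])
      show "L \<in> ?F \<and> L \<subseteq> P" using LF L_def by blast
      fix L' assume L': "L' \<in> ?F \<and> L' \<subseteq> P"
      then obtain m' where m': "m' \<in> S" "L' \<in> quadric_lines" "L' \<subseteq> T m'" using spanT by blast
      have "m' \<subseteq> H \<and> L' = P \<inter> T m'" using clU[OF m'(1,2) _ m'(3)] L' by blast
      then show "L' = L" using clD[OF m] m'(1) L_def by blast
    qed
  qed
qed


end
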